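(* Let $U_n\in U(n)$ be a unitary matrix whose eigenvalues are pairwise distinct and different from $1$, let $Z_n(X)=\det(X-U_n)$, $\xi_n(z)=Z_n(e^{2i\pi z/n})/Z_n(1)$, and let $y_k^{(n)}$, $k\in\mathbb{Z}$, be its renormalized eigenangles as in the context. Then for all $z\in\mathbb{C}$, $$\xi_n(z) = e^{i\pi z}\lim_{A\to\infty}\prod_{k=-A}^{A}\left(1-\frac{z}{y_k^{(n)}}\right),$$ the limit being taken over integers $A\to\infty$.
   Context: $(\theta_k^{(n)})_{k\in\mathbb{Z}}$ is the increasing enumeration of all real $\theta$ with $e^{i\theta}$ an eigenvalue of $U_n$, indexed so that $\dots<\theta_0^{(n)}<0<\theta_1^{(n)}<\dots$ (so $\theta_{k+n}^{(n)}=\theta_k^{(n)}+2\pi$), and $y_k^{(n)}=\frac{n}{2\pi}\theta_k^{(n)}$. *)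

theory Defs
  imports "HOL-Analysis.Analysis"
begin

definition adjoint_mat :: "complex^'n^'n \<Rightarrow> complex^'n^'n" where
  "adjoint_mat U = (\<chi> i j. cnj (U $ j $ i))"

definition unitary_mat :: "complex^'n::finite^'n \<Rightarrow> bool" where
  "unitary_mat U \<longleftrightarrow> adjoint_mat U ** U = mat 1 \<and> U ** adjoint_mat U = mat 1"

definition is_eigenvalue :: "complex^'n::finite^'n \<Rightarrow> complex \<Rightarrow> bool" where
  "is_eigenvalue U c \<longleftrightarrow> (\<exists>v. v \<noteq> 0 \<and> U *v v = c *s v)"

definition Zpoly :: "complex^'n::finite^'n \<Rightarrow> complex \<Rightarrow> complex" where
  "Zpoly U X = det (mat X - U)"

definition xi :: "complex^'n::finite^'n \<Rightarrow> complex \<Rightarrow> complex" where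
  "xi U z = Zpoly U (exp (2 * \<i> * of_real pi * z / of_nat CARD('n))) / Zpoly U 1"

end

theory Submission
  imports Defs "HOL-Computational_Algebra.Polynomial" "HOL-Real_Asymp.Real_Asymp"
begin


definition cpoly :: "complex^'n::finite^'n \<Rightarrow> complex poly" where
  "cpoly U = (\<Sum>p\<in>{p. p permutes (UNIV::'n set)}. of_int (sign p) *
       (\<Prod>i\<in>UNIV. [: - U$i$p i, if i = p i then 1 else 0 :]))"

lemma poly_cpoly: "poly (cpoly U) X = Zpoly U X"
  unfolding cpoly_def Zpoly_def det_def
  by (auto simp: poly_sum poly_prod mat_def intro!: sum.cong prod.cong)

lemma degree_cpoly_term:
  fixes U :: "complex^'n::finite^'n"
  shows "degree (\<Prod>i\<in>UNIV. [: - U$i$p i, if i = p i then 1 else 0 :]) \<le> card {i. p i = i}"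
proof -
  have "degree (\<Prod>i\<in>UNIV. [: - U$i$p i, if i = p i then 1 else 0 :])
     \<le> (\<Sum>i\<in>UNIV. degree [: - U$i$p i, if i = p i then (1::complex) else 0 :])"
    by (rule degree_prod_sum_le[simplified comp_def]) simp
  also have "\<dots> = (\<Sum>i\<in>UNIV. if p i = i then 1 else 0)"
    by (intro sum.cong) auto
  also have "\<dots> = card {i. p i = i}" by (simp add: sum.If_cases)
  finally show ?thesis .
qed

lemma coeff_cpoly_term:
  fixes U :: "complex^'n::finite^'n"
  shows "coeff (\<Prod>i\<in>UNIV. [: - U$i$p i, if i = p i then 1 else 0 :]) CARD('n) = (if p = id then 1 else 0)"
proof (cases "p = id")
  case True
  have "lead_coeff (\<Prod>i\<in>UNIV. [: - U$i$i, 1 :]) = 1"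
    by (simp add: lead_coeff_prod)
  moreover have "degree (\<Prod>i\<in>(UNIV::'n set). [: - U$i$i, 1 :]) = CARD('n)"
    by (subst degree_prod_eq_sum_degree) auto
  ultimately show ?thesis using True by simp
next
  case False
  then obtain j where j: "p j \<noteq> j" by (metis eq_id_iff)
  have "{i. p i = i} \<subset> UNIV" using j by auto
  hence "card {i. p i = i} < CARD('n)" by (simp add: psubset_card_mono)
  hence "degree (\<Prod>i\<in>UNIV. [: - U$i$p i, if i = p i then 1 else 0 :]) < CARD('n)"
    using degree_cpoly_term[of U p] by linarith
  thus ?thesis using False by (simp add: coeff_eq_0)
qed

lemma degree_cpoly: "degree (cpoly (U::complex^'n::finite^'n)) \<le> CARD('n)"
  unfolding cpoly_def
proof (intro degree_sum_le)
  fix p assume "p \<in> {p. p permutes (UNIV::'n set)}"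
  have "degree (of_int (sign p) * (\<Prod>i\<in>UNIV. [: - U$i$p i, if i = p i then 1 else 0 :]))
     \<le> degree (of_int (sign p) :: complex poly) + degree (\<Prod>i\<in>UNIV. [: - U$i$p i, if i = p i then 1 else 0 :])"
    by (rule degree_mult_le)
  also have "\<dots> \<le> 0 + card {i. p i = i}"
    using degree_cpoly_term[of U p] by (intro add_mono) (auto simp: of_int_poly)
  also have "\<dots> \<le> CARD('n)" by (simp add: card_mono)
  finally show "degree (of_int (sign p) * (\<Prod>i\<in>UNIV. [: - U$i$p i, if i = p i then 1 else 0 :])) \<le> CARD('n)" .
qed simp

lemma coeff_cpoly: "coeff (cpoly (U::complex^'n::finite^'n)) CARD('n) = 1"
proof -
  have "coeff (cpoly U) CARD('n) = (\<Sum>p\<in>{p. p permutes (UNIV::'n set)}. of_int (sign p) *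
       (if p = id then 1 else 0))"
    unfolding cpoly_def coeff_sum
  proof (intro sum.cong refl)
    fix p :: "'n \<Rightarrow> 'n"
    have "coeff (of_int (sign p) * (\<Prod>i\<in>UNIV. [: - U$i$p i, if i = p i then 1 else 0 :])) CARD('n)
       = of_int (sign p) * coeff (\<Prod>i\<in>UNIV. [: - U$i$p i, if i = p i then 1 else 0 :]) CARD('n)"
      by (simp add: of_int_poly)
    then show "coeff (of_int (sign p) * (\<Prod>i\<in>UNIV. [: - U$i$p i, if i = p i then 1 else 0 :])) CARD('n)
       = of_int (sign p) * (if p = id then 1 else 0)" by (simp only: coeff_cpoly_term)
  qed
  also have "\<dots> = (\<Sum>p\<in>{p. p permutes (UNIV::'n set)}. if p = id then 1 else 0)"
    by (intro sum.cong) (auto simp: sign_id)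
  also have "\<dots> = 1" by (simp add: sum.delta' permutes_id)
  finally show ?thesis .
qed

lemma eig_root:
  fixes U :: "complex^'n::finite^'n"
  assumes "is_eigenvalue U c" shows "Zpoly U c = 0"
proof (rule ccontr)
  assume "Zpoly U c \<noteq> 0"
  hence "invertible (mat c - U)" unfolding Zpoly_def by (simp add: invertible_det_nz)
  then obtain B where B: "B ** (mat c - U) = mat 1" unfolding invertible_def by blast
  obtain v where v: "v \<noteq> 0" "U *v v = c *s v" using assms unfolding is_eigenvalue_def by blast
  have mc: "mat c *v v = c *s v"
  proof -
    have "(\<Sum>j\<in>UNIV. (if i = j then c else 0) * v$j) = c * v$i" for i
    proof -
      have "(\<Sum>j\<in>UNIV. (if i = j then c else 0) * v$j) = (\<Sum>j\<in>UNIV. if i = j then c * v$j else 0)"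
        by (intro sum.cong) auto
      thus ?thesis by simp
    qed
    thus ?thesis by (simp add: vec_eq_iff matrix_vector_mult_def mat_def)
  qed
  have "(mat c - U) *v v = 0"
    using v mc by (simp add: matrix_vector_mult_diff_rdistrib)
  hence "B *v ((mat c - U) *v v) = 0" by simp
  hence "v = 0" by (simp add: matrix_vector_mul_assoc B)
  with v show False by simp
qed

lemma charpoly:
  fixes U :: "complex^'n::finite^'n"
  assumes "card {c. is_eigenvalue U c} = CARD('n)"
  shows "Zpoly U X = (\<Prod>e\<in>{c. is_eigenvalue U c}. X - e)"
proof -
  define E where "E = {c. is_eigenvalue U c}"
  have fin: "finite E" using assms unfolding E_def by (metis card_ge_0_finite zero_less_card_finite)
  define q where "q = (\<Prod>e\<in>E. [: -e, 1 :])"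
  have dq: "degree q = CARD('n)" unfolding q_def using assms fin
    by (subst degree_prod_eq_sum_degree) (auto simp: E_def)
  have lq: "lead_coeff q = 1" unfolding q_def by (simp add: lead_coeff_prod)
  have "cpoly U = q"
  proof (rule ccontr)
    assume ne: "cpoly U \<noteq> q"
    hence ne0: "cpoly U - q \<noteq> 0" by simp
    have "degree (cpoly U - q) \<le> CARD('n)"
      using degree_diff_le[OF degree_cpoly[of U]] dq by simp
    moreover have "coeff (cpoly U - q) CARD('n) = 0" using coeff_cpoly[of U] lq dq by simp
    ultimately have dlt: "degree (cpoly U - q) < CARD('n)" using ne0
      by (metis le_neq_implies_less leading_coeff_0_iff)
    have sub: "E \<subseteq> {x. poly (cpoly U - q) x = 0}"
    proof
      fix e assume "e \<in> E"
      hence "poly (cpoly U) e = 0" by (simp add: poly_cpoly eig_root E_def)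
      moreover have "poly q e = 0" using fin \<open>e \<in> E\<close> unfolding q_def
        by (auto simp: poly_prod prod_zero_iff)
      ultimately show "e \<in> {x. poly (cpoly U - q) x = 0}" by simp
    qed
    have "card E \<le> card {x. poly (cpoly U - q) x = 0}"
      using poly_roots_finite[OF ne0] sub by (rule card_mono)
    also have "\<dots> \<le> degree (cpoly U - q)" by (rule card_poly_roots_bound[OF ne0])
    finally have "card E \<le> degree (cpoly U - q)" .
    thus False using assms dlt unfolding E_def by linarith
  qed
  hence "Zpoly U X = poly q X" by (simp flip: poly_cpoly)
  thus ?thesis unfolding q_def E_def by (simp add: poly_prod)
qed



definition ip :: "complex^'n::finite \<Rightarrow> complex^'n \<Rightarrow> complex" where
  "ip a b = (\<Sum>i\<in>UNIV. cnj (a$i) * b$i)"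

lemma ip_adj: "ip (A *v a) b = ip a (adjoint_mat A *v (b::complex^'n::finite))"
proof -
  have "ip (A *v a) b = (\<Sum>i\<in>UNIV. \<Sum>j\<in>UNIV. cnj (A$i$j) * cnj (a$j) * b$i)"
    unfolding ip_def matrix_vector_mult_def by (simp add: sum_distrib_right sum_distrib_left mult_ac)
  also have "\<dots> = (\<Sum>j\<in>UNIV. \<Sum>i\<in>UNIV. cnj (A$i$j) * cnj (a$j) * b$i)" by (rule sum.swap)
  also have "\<dots> = ip a (adjoint_mat A *v b)"
    unfolding ip_def matrix_vector_mult_def adjoint_mat_def by (simp add: sum_distrib_left mult_ac)
  finally show ?thesis .
qed

lemma ip_self_nz: "v \<noteq> 0 \<Longrightarrow> ip v v \<noteq> (0::complex)"
proof -
  assume "v \<noteq> 0"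
  then obtain k where k: "v$k \<noteq> 0" by (metis vec_eq_iff zero_index)
  have "ip v v = of_real (\<Sum>i\<in>UNIV. (cmod (v$i))^2)"
  proof -
    have "cnj x * x = of_real ((cmod x)^2)" for x
      by (metis complex_norm_square mult.commute of_real_power)
    thus ?thesis unfolding ip_def of_real_sum by simp
  qed
  moreover have "(\<Sum>i\<in>UNIV. (cmod (v$i))^2) > 0"
  proof -
    have "(cmod (v$k))^2 \<le> (\<Sum>i\<in>UNIV. (cmod (v$i))^2)"
      by (rule member_le_sum) auto
    moreover have "(cmod (v$k))^2 > 0" using k by simp
    ultimately show ?thesis by linarith
  qed
  ultimately show ?thesis by (metis of_real_eq_0_iff less_irrefl)
qed

lemma unitary_eig_norm:
  fixes U :: "complex^'n::finite^'n"
  assumes "unitary_mat U" "is_eigenvalue U c"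
  shows "cmod c = 1"
proof -
  obtain v where v: "v \<noteq> 0" "U *v v = c *s v" using assms(2) unfolding is_eigenvalue_def by blast
  have "ip (U *v v) (U *v v) = ip v ((adjoint_mat U ** U) *v v)"
    by (simp add: ip_adj matrix_vector_mul_assoc)
  also have "\<dots> = ip v v" using assms(1) unfolding unitary_mat_def by simp
  finally have "cnj c * c * ip v v = ip v v"
    using v(2) unfolding ip_def by (simp add: sum_distrib_left mult_ac)
  hence "cnj c * c = 1" using ip_self_nz[OF v(1)] by (metis mult_cancel_right2)
  hence "(cmod c)^2 = 1" by (metis complex_norm_square mult.commute of_real_eq_1_iff)
  hence "cmod c = 1 \<or> cmod c = -1" by (simp add: power2_eq_1_iff)
  thus ?thesis using norm_ge_zero[of c] by linarith
qed


lemma period: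
  fixes \<theta> :: "int \<Rightarrow> real"
  assumes sm: "strict_mono \<theta>" and per: "\<And>t. t \<in> range \<theta> \<longleftrightarrow> t + 2*pi \<in> range \<theta>"
  shows "\<exists>c>0. \<forall>k. \<theta> (k + c) = \<theta> k + 2*pi"
proof -
  have lt: "\<theta> a < \<theta> b \<longleftrightarrow> a < b" for a b using strict_mono_less[OF sm] .
  have "\<forall>k. \<exists>s. \<theta> s = \<theta> k + 2*pi" using per by (metis rangeE rangeI)
  then obtain \<sigma> where \<sigma>: "\<And>k. \<theta> (\<sigma> k) = \<theta> k + 2*pi" by metis
  have step: "\<sigma> (k+1) = \<sigma> k + 1" for k
  proof (rule ccontr)
    assume ne: "\<sigma> (k+1) \<noteq> \<sigma> k + 1"
    have "\<theta> (\<sigma> k) < \<theta> (\<sigma> (k+1))" using \<sigma> lt[of k "k+1"] by simp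
    hence "\<sigma> k < \<sigma> (k+1)" using lt by blast
    hence a: "\<sigma> k + 1 < \<sigma> (k+1)" using ne by simp
    have "\<theta> (\<sigma> k + 1) - 2*pi + 2*pi \<in> range \<theta>" by simp
    hence "\<theta> (\<sigma> k + 1) - 2*pi \<in> range \<theta>" using per by blast
    then obtain l where l: "\<theta> l = \<theta> (\<sigma> k + 1) - 2*pi" by auto
    have "\<theta> (\<sigma> k) < \<theta> (\<sigma> k + 1)" "\<theta> (\<sigma> k + 1) < \<theta> (\<sigma> (k+1))" using lt a by auto
    hence "\<theta> k < \<theta> l" "\<theta> l < \<theta> (k+1)" using l \<sigma>[of k] \<sigma>[of "k+1"] by auto
    hence "k < l" "l < k + 1" using lt by blast+
    thus False by simp
  qed
  have sig: "\<sigma> k = k + \<sigma> 0" for k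
  proof (induct k rule: int_induct[where k=0])
    case base then show ?case by simp
  next
    case (step1 i) then show ?case using step[of i] by simp
  next
    case (step2 i) then show ?case using step[of "i-1"] by simp
  qed
  have "\<theta> 0 < \<theta> (\<sigma> 0)" using \<sigma>[of 0] pi_gt_zero by simp
  hence "0 < \<sigma> 0" using lt by blast
  moreover have "\<forall>k. \<theta> (k + \<sigma> 0) = \<theta> k + 2*pi" using \<sigma> sig by metis
  ultimately show ?thesis by blast
qed

lemma period_mult:
  fixes \<theta> :: "int \<Rightarrow> real"
  assumes "\<And>k. \<theta> (k + c) = \<theta> k + 2*pi"
  shows "\<theta> (k + c * m) = \<theta> k + 2*pi*m"
proof (induct m rule: int_induct[where k=0])
  case base then show ?case by simp
next
  case (step1 i)
  have "\<theta> (k + c * (i+1)) = \<theta> (k + c * i + c)" by (simp add: algebra_simps)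
  also have "\<dots> = \<theta> (k + c * i) + 2*pi" using assms by simp
  also have "\<dots> = \<theta> k + 2*pi*(i+1)" using step1 by (simp add: algebra_simps)
  finally show ?case by simp
next
  case (step2 i)
  have "\<theta> (k + c * i) = \<theta> (k + c * (i - 1) + c)" by (simp add: algebra_simps)
  also have "\<dots> = \<theta> (k + c*(i-1)) + 2*pi" using assms by simp
  finally show ?case using step2 by (simp add: algebra_simps)
qed


lemma sine_alg0:
  fixes x x0 K :: complex
  assumes "K \<noteq> 0" "x0 + K \<noteq> 0" "x0 - K \<noteq> 0"
  shows "1 - x^2/K^2 = (1 - x0^2/K^2) * ((x+K)/(x0+K)) * ((x-K)/(x0-K))"
proof -
  have "x0^2 - K^2 = (x0+K)*(x0-K)" by (simp add: algebra_simps power2_eq_square)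
  hence "x0^2 - K^2 \<noteq> 0" using assms by simp
  thus ?thesis using assms by (simp add: field_simps power2_eq_square)
qed

lemma ratio_aux:
  fixes a w K d :: complex
  assumes "d \<noteq> 0" "a + d*K \<noteq> 0"
  shows "1 - w/(a + d*K) = ((a-w)/d + K)/(a/d + K)"
proof -
  have "(a-w)/d + K = (a - w + d*K)/d" "a/d + K = (a + d*K)/d" using assms by (simp_all add: field_simps)
  hence "((a-w)/d + K)/(a/d + K) = (a - w + d*K)/(a + d*K)" using assms by simp
  also have "\<dots> = 1 - w/(a + d*K)" using assms by (simp add: field_simps)
  finally show ?thesis by simp
qed

lemma sine_alg:
  fixes a w K :: complex
  assumes "K \<noteq> 0" "a + 2*pi*K \<noteq> 0" "a - 2*pi*K \<noteq> 0"
  shows "1 - ((a - w)/(2*pi))^2 / K^2 = (1 - (a/(2*pi))^2/K^2) * (1 - w/(a + 2*pi*K)) * (1 - w/(a - 2*pi*K))"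
proof -
  have p: "(pi::complex) \<noteq> 0" by simp
  have e1: "1 - w/(a + 2*pi*K) = ((a-w)/(2*pi) + K)/(a/(2*pi) + K)" using assms p by (intro ratio_aux) auto
  have e2: "1 - w/(a - 2*pi*K) = ((a-w)/(2*pi) - K)/(a/(2*pi) - K)"
    using ratio_aux[of "2*pi" a "-K" w] assms p by simp
  have "a/(2*pi) + K \<noteq> 0" "a/(2*pi) - K \<noteq> 0" using assms p by (auto simp: field_simps)
  thus ?thesis unfolding e1 e2 using assms by (intro sine_alg0) auto
qed
lemma int_sym_Suc: "{- int (Suc M)..int (Suc M)} = insert (- int (Suc M)) (insert (int (Suc M)) {- int M..int M})"
  by auto

lemma sine_sym:
  fixes c :: real and w :: complex
  assumes c: "0 < c" "c < 2*pi"
  shows "(\<lambda>M::nat. \<Prod>m\<in>{- int M..int M}. 1 - w / of_real (c + 2*pi * of_int m))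
           \<longlonglongrightarrow> sin ((of_real c - w)/2) / sin (of_real c / 2)"
proof -
  define x where "x = (of_real c - w)/(2*pi)"
  define x0 where "x0 = (of_real c :: complex)/(2*pi)"
  define S where "S = (\<lambda>y::complex. \<lambda>M::nat. of_real pi * y * (\<Prod>k=1..M. 1 - y^2 / of_nat k^2))"
  define P where "P = (\<lambda>M::nat. \<Prod>m\<in>{- int M..int M}. 1 - w / of_real (c + 2*pi * of_int m))"
  have nz: "of_real (c + 2*pi * of_int m) \<noteq> (0::complex)" for m :: int
  proof -
    have "c + 2*pi * of_int m \<noteq> 0"
    proof (cases "m \<ge> 0")
      case True thus ?thesis using c by (smt (verit) mult_nonneg_nonneg of_int_nonneg pi_gt_zero)
    next
      case False hence "real_of_int m \<le> -1" by simp
      hence "2*pi * of_int m \<le> 2*pi*(-1)" using pi_gt_zero by (intro mult_left_mono) auto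
      thus ?thesis using c by linarith
    qed
    thus ?thesis by (subst of_real_eq_0_iff)
  qed
  have key: "S x M = S x0 M * P M" for M
  proof (induct M)
    case 0
    have "of_real c \<noteq> (0::complex)" using c by simp
    thus ?case unfolding S_def P_def x_def x0_def by (simp add: field_simps)
  next
    case (Suc M)
    let ?K = "of_nat (Suc M) :: complex"
    have a1: "of_real c + 2*pi*?K \<noteq> 0" using nz[of "int (Suc M)"] by simp
    have a2: "of_real c - 2*pi*?K \<noteq> 0" using nz[of "- int (Suc M)"] by (simp add: algebra_simps)
    have alg: "1 - x^2/?K^2 = (1 - x0^2/?K^2) * (1 - w/(of_real c + 2*pi*?K)) * (1 - w/(of_real c - 2*pi*?K))"
      unfolding x_def x0_def by (rule sine_alg[OF of_nat_neq_0 a1 a2])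
    have PS: "P (Suc M) = (1 - w/(of_real c + 2*pi*?K)) * (1 - w/(of_real c - 2*pi*?K)) * P M"
    proof -
      define f where "f = (\<lambda>m::int. 1 - w / (of_real (c + 2*pi * of_int m) :: complex))"
      have t1: "f (int (Suc M)) = 1 - w/(of_real c + 2*pi*?K)" unfolding f_def by simp
      have t2: "f (- int (Suc M)) = 1 - w/(of_real c - 2*pi*?K)" unfolding f_def by (simp add: algebra_simps)
      have "P (Suc M) = f (- int (Suc M)) * (f (int (Suc M)) * P M)"
        unfolding P_def int_sym_Suc f_def[symmetric] by (subst prod.insert; simp)+
      thus ?thesis unfolding t1 t2 by (simp add: mult_ac)
    qed
    have "S x (Suc M) = S x M * (1 - x^2/?K^2)" unfolding S_def by simp
    also have "\<dots> = S x0 M * P M * ((1 - x0^2/?K^2) * (1 - w/(of_real c + 2*pi*?K)) * (1 - w/(of_real c - 2*pi*?K)))"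
      using Suc alg by simp
    also have "\<dots> = S x0 (Suc M) * P (Suc M)" unfolding PS unfolding S_def by (simp add: mult_ac)
    finally show ?case .
  qed
  have l1: "S x \<longlonglongrightarrow> sin (of_real pi * x)" unfolding S_def by (rule sin_product_formula_complex)
  have l2: "S x0 \<longlonglongrightarrow> sin (of_real pi * x0)" unfolding S_def by (rule sin_product_formula_complex)
  have px: "of_real pi * x = (of_real c - w)/2" unfolding x_def by (simp add: field_simps)
  have px0: "of_real pi * x0 = of_real c/2" unfolding x0_def by (simp add: field_simps)
  have "sin (c/2) \<noteq> 0" using c by (intro sin_gt_zero[THEN less_imp_neq, symmetric]) auto
  hence s0: "sin (of_real c / 2 :: complex) \<noteq> 0"
    by (metis of_real_divide of_real_numeral sin_of_real of_real_eq_0_iff)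
  have "(\<lambda>M. S x M / S x0 M) \<longlonglongrightarrow> sin ((of_real c - w)/2) / sin (of_real c / 2)"
    using tendsto_divide[OF l1 l2] s0 px px0 by simp
  moreover have "eventually (\<lambda>M. S x0 M \<noteq> 0) sequentially"
    using l2 s0 px0 by (intro tendsto_imp_eventually_ne) auto
  hence "eventually (\<lambda>M. S x M / S x0 M = P M) sequentially"
    by eventually_elim (simp add: key)
  ultimately have "P \<longlonglongrightarrow> sin ((of_real c - w)/2) / sin (of_real c / 2)"
    by (rule Lim_transform_eventually)
  thus ?thesis unfolding P_def .
qed


lemma factor_id:
  fixes t w :: complex
  assumes "exp (\<i> * t) \<noteq> 1"
  shows "(exp (\<i> * w) - exp (\<i> * t)) / (1 - exp (\<i> * t)) = exp (\<i> * w / 2) * (sin ((t - w)/2) / sin (t/2))"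
proof -
  define a where "a = exp (\<i> * w / 2)"
  define b where "b = exp (\<i> * t / 2)"
  have a0: "a \<noteq> 0" and b0: "b \<noteq> 0" unfolding a_def b_def by simp_all
  have ea: "exp (\<i> * w) = a * a" unfolding a_def by (simp flip: exp_add)
  have eb: "exp (\<i> * t) = b * b" unfolding b_def by (simp flip: exp_add)
  have s1: "sin ((t - w)/2) = (b / a - a / b) / (2*\<i>)"
  proof -
    have "\<i> * ((t - w)/2) = \<i>*t/2 - \<i>*w/2" "-(\<i> * ((t - w)/2)) = \<i>*w/2 - \<i>*t/2"
      by (simp_all add: field_simps)
    thus ?thesis unfolding sin_exp_eq a_def b_def by (simp only: exp_diff)
  qed
  have s2: "sin (t/2) = (b - 1 / b) / (2*\<i>)"
    unfolding sin_exp_eq b_def by (simp add: exp_minus field_simps)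
  have bb: "b * b \<noteq> 1" using assms eb by simp
  hence bb': "b * b - 1 \<noteq> 0" by simp
  show ?thesis unfolding ea eb s1 s2 a_def[symmetric]
    using a0 b0 bb bb' by (simp add: field_simps)
qed


lemma prod_split_int:
  fixes a b c :: int
  assumes "a \<le> b + 1" "b \<le> c"
  shows "prod f {a..c} = prod f {a..b} * prod f {b+1..c}"
proof -
  have "{a..c} = {a..b} \<union> {b+1..c}" using assms by auto
  moreover have "{a..b} \<inter> {b+1..c} = {}" by auto
  ultimately show ?thesis by (simp add: prod.union_disjoint)
qed

lemma prod_shift_int:
  fixes a b s :: int
  shows "prod f {a + s..b + s} = (\<Prod>i\<in>{a..b}. f (i + s))"
proof -
  have "prod f ((\<lambda>i. i + s) ` {a..b}) = (\<Prod>i\<in>{a..b}. f (i + s))"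
    by (subst prod.reindex) (auto simp: inj_on_def)
  thus ?thesis by simp
qed

lemma seq_mod:
  fixes X :: "nat \<Rightarrow> 'a::metric_space"
  assumes n: "n > 0" and lim: "\<And>r. r < n \<Longrightarrow> (\<lambda>M. X (n*M + r)) \<longlonglongrightarrow> L"
  shows "X \<longlonglongrightarrow> L"
proof (rule tendstoI)
  fix e :: real assume e: "e > 0"
  have "eventually (\<lambda>M. \<forall>r\<in>{..<n}. dist (X (n*M + r)) L < e) sequentially"
    using lim e by (intro eventually_ball_finite) (auto intro: tendstoD)
  then obtain M0 where M0: "\<And>M. M \<ge> M0 \<Longrightarrow> \<forall>r\<in>{..<n}. dist (X (n*M + r)) L < e"
    unfolding eventually_sequentially by blast
  show "eventually (\<lambda>A. dist (X A) L < e) sequentially"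
    unfolding eventually_sequentially
  proof (intro exI allI impI)
    fix A assume "n * M0 \<le> A"
    hence "M0 \<le> A div n" using n by (metis div_le_mono nonzero_mult_div_cancel_left not_gr0)
    moreover have "A = n * (A div n) + A mod n" by simp
    moreover have "A mod n < n" using n by simp
    ultimately show "dist (X A) L < e" using M0 by (metis lessThan_iff)
  qed
qed

lemma tend_one_pos:
  fixes w :: complex and a :: real
  shows "(\<lambda>M::nat. 1 - w / of_real (a + 2*pi*real M)) \<longlonglongrightarrow> 1"
proof -
  have "(\<lambda>M::nat. inverse (a + 2*pi*real M)) \<longlonglongrightarrow> 0" by real_asymp
  hence "(\<lambda>M::nat. 1 - w * of_real (inverse (a + 2*pi*real M))) \<longlonglongrightarrow> 1 - w * of_real 0"
    by (intro tendsto_intros)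
  moreover have "\<And>x. w / of_real x = w * of_real (inverse x)" by (simp add: divide_inverse of_real_inverse)
  ultimately show ?thesis by (simp only:) simp
qed

lemma tend_one_neg:
  fixes w :: complex and a :: real
  shows "(\<lambda>M::nat. 1 - w / of_real (a - 2*pi*real M)) \<longlonglongrightarrow> 1"
proof -
  have "(\<lambda>M::nat. inverse (a - 2*pi*real M)) \<longlonglongrightarrow> 0" by real_asymp
  hence "(\<lambda>M::nat. 1 - w * of_real (inverse (a - 2*pi*real M))) \<longlonglongrightarrow> 1 - w * of_real 0"
    by (intro tendsto_intros)
  moreover have "\<And>x. w / of_real x = w * of_real (inverse x)" by (simp add: divide_inverse of_real_inverse)
  ultimately show ?thesis by (simp only:) simp
qed

lemma reindex_block:
  fixes N M :: int
  assumes N: "N > 0" and M: "M \<ge> 0"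
  shows "(\<Prod>k\<in>{1 - N*M..N + N*M}. f k) = (\<Prod>j\<in>{1..N}. \<Prod>m\<in>{-M..M}. f (j + N*m))"
proof -
  define g where "g = (\<lambda>p::int\<times>int. fst p + N * snd p)"
  have dm: "(j - 1 + N*m) div N = m" "(j - 1 + N*m) mod N = j - 1" if "1 \<le> j" "j \<le> N" for j m
    using that N by (simp_all add: div_add_self2 mod_pos_pos_trivial div_pos_pos_trivial add.commute)
  have inj: "inj_on g ({1..N} \<times> {-M..M})"
  proof (rule inj_onI)
    fix p q assume p: "p \<in> {1..N} \<times> {-M..M}" and q: "q \<in> {1..N} \<times> {-M..M}" and e: "g p = g q"
    have e': "fst p - 1 + N * snd p = fst q - 1 + N * snd q" using e unfolding g_def by simp
    have "snd p = snd q" using dm[of "fst p" "snd p"] dm[of "fst q" "snd q"] p q e' by auto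
    moreover have "fst p = fst q" using e' calculation by simp
    ultimately show "p = q" by (simp add: prod_eq_iff)
  qed
  have img: "g ` ({1..N} \<times> {-M..M}) = {1 - N*M..N + N*M}"
  proof (intro equalityI subsetI)
    fix k assume "k \<in> g ` ({1..N} \<times> {-M..M})"
    then obtain j m where jm: "1 \<le> j" "j \<le> N" "-M \<le> m" "m \<le> M" "k = j + N*m" unfolding g_def by auto
    have "N * (-M) \<le> N*m" "N*m \<le> N*M" using jm N mult_left_mono[of "-M" m N] mult_left_mono[of m M N] by auto
    hence "1 - N*M \<le> k" "k \<le> N + N*M" using jm by linarith+
    thus "k \<in> {1 - N*M..N + N*M}" by simp
  next
    fix k assume k: "k \<in> {1 - N*M..N + N*M}"
    define j where "j = (k - 1) mod N + 1"
    define m where "m = (k - 1) div N"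
    have kk: "k = j + N*m" unfolding j_def m_def by (simp add: algebra_simps)
    have j: "1 \<le> j" "j \<le> N" unfolding j_def using N pos_mod_bound[of N "k-1"] pos_mod_sign[of N "k-1"]
      by linarith+
    have "0 < N * (m + M + 1)" "0 < N * (M + 1 - m)" using kk k j by (auto simp: algebra_simps)
    hence "0 < m + M + 1" "0 < M + 1 - m" using N by (simp_all add: zero_less_mult_iff)
    hence "-M \<le> m" "m \<le> M" by linarith+
    with j kk show "k \<in> g ` ({1..N} \<times> {-M..M})" unfolding g_def by (auto intro!: image_eqI[of _ _ "(j,m)"])
  qed
  have "(\<Prod>j\<in>{1..N}. \<Prod>m\<in>{-M..M}. f (j + N*m)) = (\<Prod>p\<in>{1..N} \<times> {-M..M}. f (g p))"
    unfolding g_def by (simp add: prod.cartesian_product case_prod_beta)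
  also have "\<dots> = prod f (g ` ({1..N} \<times> {-M..M}))" using prod.reindex[OF inj, of f] by (simp add: comp_def)
  finally show ?thesis using img by simp
qed

theorem proposition4p1:
  fixes U :: "complex^'n::finite^'n"
    and \<theta> :: "int \<Rightarrow> real"
    and z :: complex
  assumes unitary: "unitary_mat U"
    and distinct: "card {c. is_eigenvalue U c} = CARD('n)"
    and not_one: "\<not> is_eigenvalue U 1"
    and theta_mono: "strict_mono \<theta>"
    and theta_range: "range \<theta> = {t. is_eigenvalue U (exp (\<i> * of_real t))}"
    and theta_0: "\<theta> 0 < 0"
    and theta_1: "0 < \<theta> 1"
  shows "convergent (\<lambda>A::nat. \<Prod>k\<in>{- int A..int A}.
            (1 - z / of_real (real CARD('n) / (2 * pi) * \<theta> k)))
       \<and> xi U z = exp (\<i> * of_real pi * z) *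
            lim (\<lambda>A::nat. \<Prod>k\<in>{- int A..int A}.
            (1 - z / of_real (real CARD('n) / (2 * pi) * \<theta> k)))"
proof -
  define n where "n = CARD('n)"
  define N where "N = int n"
  have n0: "n > 0" unfolding n_def by simp
  define E where "E = {c. is_eigenvalue U c}"
  have sm_less: "\<theta> a < \<theta> b \<longleftrightarrow> a < b" for a b using strict_mono_less[OF theta_mono] .
  have sm_le: "\<theta> a \<le> \<theta> b \<longleftrightarrow> a \<le> b" for a b using strict_mono_less_eq[OF theta_mono] .
  have e2pi: "exp (\<i> * complex_of_real (t + 2*pi)) = exp (\<i> * complex_of_real t)" for t
  proof -
    have "\<i> * complex_of_real (t + 2*pi) = \<i> * of_real t + 2 * of_real pi * \<i>" by (simp add: algebra_simps)
    thus ?thesis by (simp add: exp_add)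
  qed
  have per: "\<And>t. t \<in> range \<theta> \<longleftrightarrow> t + 2*pi \<in> range \<theta>" using theta_range e2pi by auto
  obtain c where c0: "c > 0" and cper: "\<And>k. \<theta> (k + c) = \<theta> k + 2*pi"
    using period[OF theta_mono per] by blast
  have cmul: "\<theta> (k + c*m) = \<theta> k + 2*pi*m" for k m using period_mult cper by blast
  have th_b: "0 < \<theta> j \<and> \<theta> j < 2*pi" if "1 \<le> j" "j \<le> c" for j
  proof -
    have "\<theta> 1 \<le> \<theta> j" "\<theta> j \<le> \<theta> (0 + c)" using that sm_le by auto
    thus ?thesis using theta_0 theta_1 cper[of 0] by auto
  qed
  define ev where "ev = (\<lambda>j. exp (\<i> * complex_of_real (\<theta> j)))"
  have inj: "inj_on ev {1..c}"
  proof (rule inj_onI)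
    fix j l assume j: "j \<in> {1..c}" and l: "l \<in> {1..c}" and e: "ev j = ev l"
    then obtain m :: int where m: "\<i> * complex_of_real (\<theta> j) = \<i> * complex_of_real (\<theta> l) + (of_int (2 * m) * pi) * \<i>"
      unfolding ev_def exp_eq by blast
    have "Im (\<i> * complex_of_real (\<theta> j)) = Im (\<i> * complex_of_real (\<theta> l) + (of_int (2 * m) * pi) * \<i>)"
      using m by simp
    hence tm: "\<theta> j = \<theta> l + 2*pi*m" by simp
    have bj: "0 < \<theta> j \<and> \<theta> j < 2*pi" using th_b j by auto
    have bl: "0 < \<theta> l \<and> \<theta> l < 2*pi" using th_b l by auto
    have h1: "2*pi*real_of_int m < 2*pi*1" and h2: "2*pi*(-1) < 2*pi*real_of_int m" using bj bl tm by linarith+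
    have p2: "(0::real) < 2*pi" by simp
    have "real_of_int m < 1" using h1 mult_less_cancel_left_pos[OF p2] by blast
    moreover have "-1 < real_of_int m" using h2 mult_less_cancel_left_pos[OF p2] by blast
    ultimately have "m < 1" "-1 < m" by simp_all
    hence "m = 0" by simp
    hence "\<theta> j = \<theta> l" using tm by simp
    thus "j = l" using strict_mono_eq[OF theta_mono] by blast
  qed
  have Eeq: "E = ev ` {1..c}"
  proof (intro equalityI subsetI)
    fix e assume "e \<in> E"
    hence eig: "is_eigenvalue U e" unfolding E_def by simp
    hence "cmod e = 1" using unitary_eig_norm[OF unitary] by blast
    hence "e = exp (\<i> * complex_of_real (Arg e))"
    proof -
      have "e \<noteq> 0" using \<open>cmod e = 1\<close> by auto
      thus ?thesis using cis_Arg[of e] \<open>cmod e = 1\<close> by (simp add: cis_conv_exp sgn_div_norm)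
    qed
    hence "Arg e \<in> range \<theta>" using theta_range eig by auto
    then obtain k where k: "Arg e = \<theta> k" by auto
    define j where "j = (k - 1) mod c + 1"
    define m where "m = (k - 1) div c"
    have kk: "k = j + c*m" unfolding j_def m_def by (simp add: algebra_simps)
    have j: "1 \<le> j" "j \<le> c" unfolding j_def using c0 pos_mod_bound[of c "k-1"] pos_mod_sign[of c "k-1"]
      by linarith+
    have "e = exp (\<i> * complex_of_real (\<theta> j + 2*pi*m))" using k kk cmul \<open>e = _\<close> by metis
    also have "\<i> * complex_of_real (\<theta> j + 2*pi*m) = \<i> * complex_of_real (\<theta> j) + \<i> * (of_int m * (of_real pi * 2))"
      by (simp add: algebra_simps)
    finally have "e = ev j" unfolding ev_def by (simp only: exp_plus_2pin)
    thus "e \<in> ev ` {1..c}" using j by auto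
  next
    fix e assume "e \<in> ev ` {1..c}"
    then obtain j where "e = ev j" by auto
    moreover have "\<theta> j \<in> range \<theta>" by simp
    ultimately show "e \<in> E" unfolding E_def ev_def using theta_range by auto
  qed
  have "card E = nat c" using card_image[OF inj] Eeq by simp
  hence cN: "c = N" using distinct c0 unfolding E_def N_def n_def by simp
  have Zf: "Zpoly U X = (\<Prod>j\<in>{1..N}. X - ev j)" for X
  proof -
    have "Zpoly U X = (\<Prod>e\<in>E. X - e)" unfolding E_def by (rule charpoly[OF distinct])
    also have "\<dots> = (\<Prod>j\<in>{1..N}. X - ev j)" unfolding Eeq cN[symmetric]
      by (subst prod.reindex[OF inj]) (simp add: comp_def)
    finally show ?thesis .
  qed
  have ne1: "ev j \<noteq> 1" if "j \<in> {1..N}" for j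
    using that Eeq cN not_one unfolding E_def by (metis imageI mem_Collect_eq)
  define w where "w = 2 * of_real pi * z / of_nat n"
  define s where "s = (\<lambda>j. sin ((of_real (\<theta> j) - w)/2) / sin (of_real (\<theta> j)/2))"
  define L where "L = (\<Prod>j\<in>{1..N}. s j)"
  have xiL: "xi U z = exp (\<i> * of_real pi * z) * L"
  proof -
    have arg: "2 * \<i> * of_real pi * z / of_nat CARD('n) = \<i> * w" unfolding w_def n_def by simp
    have "xi U z = (\<Prod>j\<in>{1..N}. exp (\<i> * w) - ev j) / (\<Prod>j\<in>{1..N}. 1 - ev j)"
      unfolding xi_def arg Zf ..
    also have "\<dots> = (\<Prod>j\<in>{1..N}. (exp (\<i> * w) - ev j) / (1 - ev j))" by (rule prod_dividef[symmetric])
    also have "\<dots> = (\<Prod>j\<in>{1..N}. exp (\<i> * w / 2) * s j)"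
    proof (rule prod.cong[OF refl])
      fix j assume "j \<in> {1..N}"
      thus "(exp (\<i> * w) - ev j) / (1 - ev j) = exp (\<i> * w / 2) * s j"
        using ne1 unfolding ev_def s_def by (intro factor_id) auto
    qed
    also have "\<dots> = exp (\<i> * w / 2) ^ n * L" unfolding L_def prod.distrib N_def by simp
    also have "exp (\<i> * w / 2) ^ n = exp (\<i> * of_real pi * z)"
      unfolding exp_of_nat_mult[symmetric] w_def using n0 by (simp add: field_simps)
    finally show ?thesis .
  qed
  define f where "f = (\<lambda>k. 1 - w / complex_of_real (\<theta> k))"
  have fterm: "(1 - z / of_real (real CARD('n) / (2 * pi) * \<theta> k)) = f k" for k
  proof -
    have "z / complex_of_real (real CARD('n) / (2 * pi)) = w" unfolding w_def n_def
      by (simp add: field_simps)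
    hence "w / complex_of_real (\<theta> k) = z / (complex_of_real (real CARD('n) / (2 * pi)) * complex_of_real (\<theta> k))"
      by (metis divide_divide_eq_left)
    thus ?thesis unfolding f_def by (simp only: of_real_mult)
  qed
  define F where "F = (\<lambda>A::nat. \<Prod>k\<in>{- int A..int A}. f k)"
  have Feq: "(\<lambda>A::nat. \<Prod>k\<in>{- int A..int A}. (1 - z / of_real (real CARD('n) / (2 * pi) * \<theta> k))) = F"
    unfolding F_def fterm ..
  have N0: "N > 0" using n0 unfolding N_def by simp
  define Q where "Q = (\<lambda>M::nat. \<Prod>k\<in>{1 - N*int M..N + N*int M}. f k)"
  have QL: "Q \<longlonglongrightarrow> L"
  proof -
    have "Q = (\<lambda>M. \<Prod>j\<in>{1..N}. \<Prod>m\<in>{- int M..int M}. 1 - w / of_real (\<theta> j + 2*pi * of_int m))"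
    proof
      fix M
      show "Q M = (\<Prod>j\<in>{1..N}. \<Prod>m\<in>{- int M..int M}. 1 - w / of_real (\<theta> j + 2*pi * of_int m))"
        unfolding Q_def reindex_block[OF N0 of_nat_0_le_iff] using cmul cN unfolding f_def by simp
    qed
    also have "\<dots> \<longlonglongrightarrow> L" unfolding L_def s_def
    proof (intro tendsto_prod)
      fix j assume "j \<in> {1..N}"
      hence "0 < \<theta> j" "\<theta> j < 2*pi" using th_b cN by auto
      thus "(\<lambda>M. \<Prod>m\<in>{- int M..int M}. 1 - w / of_real (\<theta> j + 2*pi * of_int m))
              \<longlonglongrightarrow> sin ((of_real (\<theta> j) - w)/2) / sin (of_real (\<theta> j)/2)"
        by (rule sine_sym)
    qed
    finally show ?thesis .
  qed
  have res: "(\<lambda>M. F (n*M + r)) \<longlonglongrightarrow> L" if r: "r < n" for r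
  proof -
    define B where "B = (\<lambda>M::nat. \<Prod>i\<in>{int r + 1..N}. f (i + N * int M))"
    define C where "C = (\<lambda>M::nat. \<Prod>i\<in>{- int r..0}. f (i + - (N * int M)))"
    have key: "F (n*M + r) * B M = C M * Q M" for M
    proof -
      have i: "int (n*M + r) = N * int M + int r" unfolding N_def by simp
      have rN: "int r < N" using r unfolding N_def by simp
      have NM: "0 \<le> N * int M" using N0 by simp
      have "F (n*M + r) * B M = (\<Prod>k\<in>{-(N*int M + int r)..N * int M + N}. f k)"
      proof -
        have "B M = (\<Prod>k\<in>{(int r + 1) + N * int M..N + N * int M}. f k)"
          unfolding B_def by (rule prod_shift_int[symmetric])
        also have "\<dots> = (\<Prod>k\<in>{(N*int M + int r) + 1..N * int M + N}. f k)" by (simp add: algebra_simps)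
        finally show ?thesis unfolding F_def i
          using prod_split_int[of "-(N*int M + int r)" "N*int M + int r" "N * int M + N" f] rN NM by simp
      qed
      also have "\<dots> = (\<Prod>k\<in>{-(N*int M + int r)..-(N*int M)}. f k) * (\<Prod>k\<in>{-(N*int M) + 1..N * int M + N}. f k)"
        using prod_split_int[of "-(N*int M + int r)" "-(N*int M)" "N * int M + N" f] NM N0 by simp
      also have "(\<Prod>k\<in>{-(N*int M + int r)..-(N*int M)}. f k) = C M"
        unfolding C_def using prod_shift_int[of f "- int r" "- (N * int M)" 0] by (simp add: algebra_simps)
      also have "(\<Prod>k\<in>{-(N*int M) + 1..N * int M + N}. f k) = Q M"
        unfolding Q_def by (simp add: algebra_simps)
      finally show ?thesis .
    qed
    have B1: "B \<longlonglongrightarrow> 1"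
    proof -
      have "B = (\<lambda>M. \<Prod>i\<in>{int r + 1..N}. 1 - w / of_real (\<theta> i + 2*pi*real M))"
      proof
        fix M
        have "\<theta> (i + N * int M) = \<theta> i + 2*pi*real M" for i
          using cmul[of i "int M"] cN by simp
        thus "B M = (\<Prod>i\<in>{int r + 1..N}. 1 - w / of_real (\<theta> i + 2*pi*real M))"
          unfolding B_def f_def by simp
      qed
      also have "\<dots> \<longlonglongrightarrow> (\<Prod>i\<in>{int r + 1..N}. 1)" by (intro tendsto_prod tend_one_pos)
      finally show ?thesis by simp
    qed
    have C1: "C \<longlonglongrightarrow> 1"
    proof -
      have "C = (\<lambda>M. \<Prod>i\<in>{- int r..0}. 1 - w / of_real (\<theta> i - 2*pi*real M))"
      proof
        fix M
        have "\<theta> (i + - (N * int M)) = \<theta> i - 2*pi*real M" for i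
          using cmul[of i "- int M"] cN by simp
        thus "C M = (\<Prod>i\<in>{- int r..0}. 1 - w / of_real (\<theta> i - 2*pi*real M))"
          unfolding C_def f_def by simp
      qed
      also have "\<dots> \<longlonglongrightarrow> (\<Prod>i\<in>{- int r..0}. 1)" by (intro tendsto_prod tend_one_neg)
      finally show ?thesis by simp
    qed
    have "(\<lambda>M. C M * Q M / B M) \<longlonglongrightarrow> 1 * L / 1"
      by (intro tendsto_intros C1 QL B1) simp
    moreover have "eventually (\<lambda>M. B M \<noteq> 0) sequentially"
      using tendsto_imp_eventually_ne[OF B1, of 0] by simp
    hence "eventually (\<lambda>M. C M * Q M / B M = F (n*M + r)) sequentially"
      by eventually_elim (metis key nonzero_mult_div_cancel_right)
    ultimately show ?thesis by (simp add: Lim_transform_eventually)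
  qed
  have FL: "F \<longlonglongrightarrow> L" using n0 res by (rule seq_mod)
  hence "convergent F" "lim F = L" by (auto simp: convergent_def limI)
  thus ?thesis unfolding Feq using xiL by simp
qed

end
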